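(* For every finite simple undirected graph $G$, the graph $\mathsf{TJ}_{\omega(G)}(G)$ does not contain a diamond ($K_4$ minus one edge) as an induced subgraph.
   Context: $\omega(G)$ is the maximum size of a clique of $G$. $\mathsf{TJ}_k(G)$ is the graph whose vertices are the cliques of $G$ of size $k$, two such cliques $C, C'$ being adjacent iff $|C \setminus C'| = |C' \setminus C| = 1$. *)

theory Defs
  imports Main
begin

definition simple_graph :: "'a set \<Rightarrow> ('a \<Rightarrow> 'a \<Rightarrow> bool) \<Rightarrow> bool" where
  "simple_graph V E \<longleftrightarrow> finite V \<and> (\<forall>x y. E x y \<longrightarrow> x \<in> V \<and> y \<in> V)
     \<and> (\<forall>x y. E x y \<longrightarrow> E y x) \<and> (\<forall>x. \<not> E x x)"

definition is_clique :: "'a set \<Rightarrow> ('a \<Rightarrow> 'a \<Rightarrow> bool) \<Rightarrow> 'a set \<Rightarrow> bool" where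
  "is_clique V E C \<longleftrightarrow> C \<subseteq> V \<and> (\<forall>x\<in>C. \<forall>y\<in>C. x \<noteq> y \<longrightarrow> E x y)"

definition clique_number :: "'a set \<Rightarrow> ('a \<Rightarrow> 'a \<Rightarrow> bool) \<Rightarrow> nat" where
  "clique_number V E = Max {card C | C. is_clique V E C}"

definition TJ_vertices :: "'a set \<Rightarrow> ('a \<Rightarrow> 'a \<Rightarrow> bool) \<Rightarrow> nat \<Rightarrow> 'a set set" where
  "TJ_vertices V E k = {C. is_clique V E C \<and> card C = k}"

definition TJ_edge :: "'a set \<Rightarrow> ('a \<Rightarrow> 'a \<Rightarrow> bool) \<Rightarrow> nat \<Rightarrow> 'a set \<Rightarrow> 'a set \<Rightarrow> bool" where
  "TJ_edge V E k C D \<longleftrightarrow> C \<in> TJ_vertices V E k \<and> D \<in> TJ_vertices V E k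
     \<and> card (C - D) = 1 \<and> card (D - C) = 1"

definition has_induced_diamond :: "'b set \<Rightarrow> ('b \<Rightarrow> 'b \<Rightarrow> bool) \<Rightarrow> bool" where
  "has_induced_diamond W F \<longleftrightarrow> (\<exists>a\<in>W. \<exists>b\<in>W. \<exists>c\<in>W. \<exists>d\<in>W.
     distinct [a, b, c, d] \<and> F a b \<and> F a c \<and> F a d \<and> F b c \<and> F b d \<and> \<not> F c d)"

end

theory Submission
  imports Defs
begin

lemma inter_card:
  assumes "finite A" "finite C" "card A = k" "card C = k" "card (C - A) = 1"
  shows "card (A \<inter> C) = k - 1 \<and> k \<ge> 1"
proof -
  have "card (C - A) = card C - card (C \<inter> A)"
    using assms(2) by (simp add: card_Diff_subset_Int)
  moreover have "card (C - A) \<le> card C" using assms(2) by (simp add: card_mono)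
  ultimately show ?thesis using assms by (simp add: Int_commute)
qed

lemma subset_S:
  assumes "finite A" "finite C" "card A = k" "card C = k" "card (C - A) = 1"
    and "x \<in> A" "x \<notin> C"
  shows "C \<inter> A = A - {x}"
proof -
  have "card (A \<inter> C) = k - 1" using inter_card[OF assms(1-5)] by simp
  moreover have "C \<inter> A \<subseteq> A - {x}" using assms by auto
  moreover have "card (A - {x}) = k - 1" using assms by simp
  ultimately show ?thesis using assms(1)
    by (metis Int_commute card_subset_eq finite_Diff)
qed

lemma comb:
  assumes fin: "finite A" "finite B" "finite C"
    and cards: "card A = k" "card B = k" "card C = k"
    and "card (A - B) = 1" "card (B - A) = 1"
    and "card (C - A) = 1" "card (C - B) = 1"
    and "A - B = {a}" "B - A = {b}"
    and nab: "\<not> (a \<in> C \<and> b \<in> C)"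
  shows "\<exists>c. c \<notin> A \<inter> B \<and> C = insert c (A \<inter> B)"
proof -
  have sub: "A \<inter> B \<subseteq> C"
  proof
    fix x assume x: "x \<in> A \<inter> B"
    show "x \<in> C"
    proof (rule ccontr)
      assume "x \<notin> C"
      then have "C \<inter> A = A - {x}" "C \<inter> B = B - {x}"
        using subset_S[OF fin(1,3) cards(1,3) assms(9)] subset_S[OF fin(2,3) cards(2,3) assms(10)] x by auto
      moreover have "a \<noteq> x" "b \<noteq> x" "a \<in> A" "b \<in> B" using assms(11,12) x by auto
      ultimately show False using nab by blast
    qed
  qed
  have ck: "card (A \<inter> B) = k - 1" "k \<ge> 1"
    using inter_card[OF fin(2,1) cards(2,1) assms(7)] by (auto simp add: Int_commute)
  have "C - A \<inter> B \<noteq> {}"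
  proof
    assume "C - A \<inter> B = {}"
    then have "C \<subseteq> A \<inter> B" by auto
    then have "card C \<le> k - 1" using ck(1) fin(1) card_mono[of "A \<inter> B" C] by simp
    then show False using cards ck by simp
  qed
  then obtain c where c: "c \<in> C" "c \<notin> A \<inter> B" by auto
  have "insert c (A \<inter> B) \<subseteq> C" using c sub by auto
  moreover have "card (insert c (A \<inter> B)) = k" using c ck fin by simp
  ultimately have "insert c (A \<inter> B) = C" using fin cards by (metis card_subset_eq)
  then show ?thesis using c by auto
qed

theorem proposition4p3:
  fixes V :: "'a set" and E :: "'a \<Rightarrow> 'a \<Rightarrow> bool"
  assumes "simple_graph V E"
  shows "\<not> has_induced_diamond (TJ_vertices V E (clique_number V E))
                                 (TJ_edge V E (clique_number V E))"
proof
  let ?k = "clique_number V E"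
  have finV: "finite V" using assms by (simp add: simple_graph_def)
  have maxk: "card C \<le> ?k" if "is_clique V E C" for C
  proof -
    have "{card C | C. is_clique V E C} \<subseteq> {0..card V}"
      using finV by (auto simp: is_clique_def card_mono)
    then have "finite {card C | C. is_clique V E C}" using finite_subset by blast
    then show ?thesis unfolding clique_number_def using that by (auto intro: Max_ge)
  qed
  assume "has_induced_diamond (TJ_vertices V E ?k) (TJ_edge V E ?k)"
  then obtain A B C D where 
    d: "distinct [A, B, C, D]" "TJ_edge V E ?k A B" "TJ_edge V E ?k A C" "TJ_edge V E ?k A D"
       "TJ_edge V E ?k B C" "TJ_edge V E ?k B D" "\<not> TJ_edge V E ?k C D"
    unfolding has_induced_diamond_def by blast
  have TV: "A \<in> TJ_vertices V E ?k" "B \<in> TJ_vertices V E ?k" "C \<in> TJ_vertices V E ?k"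
    "D \<in> TJ_vertices V E ?k" using d(2,3,4) unfolding TJ_edge_def by blast+
  have cl: "is_clique V E X" "card X = ?k" "finite X" if "X \<in> TJ_vertices V E ?k" for X
  proof -
    show "is_clique V E X" "card X = ?k" using that by (simp_all add: TJ_vertices_def)
    then show "finite X" using finV by (meson finite_subset is_clique_def)
  qed
  have c1: "card (A - B) = 1" "card (B - A) = 1" "card (C - A) = 1" "card (C - B) = 1"
     "card (D - A) = 1" "card (D - B) = 1"
    using d by (auto simp: TJ_edge_def)
  obtain a where a: "A - B = {a}" using c1(1) card_1_singletonE by blast
  obtain b where b: "B - A = {b}" using c1(2) card_1_singletonE by blast
  have nE: "\<not> E a b"
  proof
    assume eab: "E a b"
    have sym: "E b a" using eab assms unfolding simple_graph_def by blast
    have "is_clique V E (insert b A)"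
      unfolding is_clique_def
    proof (intro conjI ballI impI)
      show "insert b A \<subseteq> V" using cl(1)[OF TV(1)] cl(1)[OF TV(2)] b
        unfolding is_clique_def by blast
      fix x y assume x: "x \<in> insert b A" and y: "y \<in> insert b A" and xy: "x \<noteq> y"
      have Bc: "\<And>x y. x \<in> B \<Longrightarrow> y \<in> B \<Longrightarrow> x \<noteq> y \<Longrightarrow> E x y"
        using cl(1)[OF TV(2)] unfolding is_clique_def by blast
      have Ac: "\<And>x y. x \<in> A \<Longrightarrow> y \<in> A \<Longrightarrow> x \<noteq> y \<Longrightarrow> E x y"
        using cl(1)[OF TV(1)] unfolding is_clique_def by blast
      have bB: "b \<in> B" using b by blast
      have inB: "z \<in> A \<Longrightarrow> z \<noteq> a \<Longrightarrow> z \<in> B" for z using a by blast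
      show "E x y"
      proof (cases "x = b")
        case True
        then have "y \<in> A" using y xy by blast
        then show ?thesis using True sym xy bB inB Bc by (cases "y = a") auto
      next
        case False
        then have xA: "x \<in> A" using x by blast
        show ?thesis
        proof (cases "y = b")
          case True
          then show ?thesis using xA eab xy bB inB Bc by (cases "x = a") auto
        next
          case False
          then show ?thesis using xA y xy Ac by blast
        qed
      qed
    qed
    moreover have "card (insert b A) = ?k + 1" using cl[OF TV(1)] b by (metis Diff_iff card_insert_disjoint insertI1 Suc_eq_plus1)
    ultimately show False using maxk by fastforce
  qed
  have ab: "a \<noteq> b" using a b by auto
  have nC: "\<not> (a \<in> C \<and> b \<in> C)" using cl(1)[OF TV(3)] nE ab by (auto simp: is_clique_def)
  have nD: "\<not> (a \<in> D \<and> b \<in> D)" using cl(1)[OF TV(4)] nE ab by (auto simp: is_clique_def)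
  obtain c where c: "c \<notin> A \<inter> B" "C = insert c (A \<inter> B)"
    using comb[OF cl(3)[OF TV(1)] cl(3)[OF TV(2)] cl(3)[OF TV(3)] cl(2)[OF TV(1)] cl(2)[OF TV(2)] cl(2)[OF TV(3)]
      c1(1,2) c1(3,4) a b nC] by blast
  obtain e where e: "e \<notin> A \<inter> B" "D = insert e (A \<inter> B)"
    using comb[OF cl(3)[OF TV(1)] cl(3)[OF TV(2)] cl(3)[OF TV(4)] cl(2)[OF TV(1)] cl(2)[OF TV(2)] cl(2)[OF TV(4)]
      c1(1,2) c1(5,6) a b nD] by blast
  have "c \<noteq> e" using c(2) e(2) d(1) by auto
  then have "C - D = {c}" "D - C = {e}" using c e by auto
  then have "TJ_edge V E ?k C D" using TV(3,4) by (simp add: TJ_edge_def)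
  then show False using d by simp
qed

end
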